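(* Let $k,t\ge0$ be integers and $\mathcal{H}$ a hypothesis class. If $\mathrm{ELdim}(\mathcal{H},k)\ge t$, then $\mathcal{S}(\mathcal{H},t)\ge\binom{t}{\le k+1}$.
   Context: Hypotheses are maps $\mathcal{X}\to\{-1,+1\}$; $\binom{t}{\le j}=\sum_{i=0}^{j}\binom{t}{i}$. Tree shattering coefficient: for a depth-$t$ $\mathcal{X}$-valued tree $\mathbf{x}=(\mathbf{x}_1,\dots,\mathbf{x}_t)$, $\mathbf{x}_s:\{\pm1\}^{s-1}\to\mathcal{X}$, let $S(\mathcal{H},\mathbf{x})=\{\epsilon\in\{\pm1\}^t:\exists h\in\mathcal{H},\ \epsilon_s=h(\mathbf{x}_s(\epsilon_1,\dots,\epsilon_{s-1}))\ \forall s\}$ and $\mathcal{S}(\mathcal{H},t)=\max_{\mathbf{x}}|S(\mathcal{H},\mathbf{x})|$ for $t\ge1$; $\mathcal{S}(\mathcal{H},0)=1$ if $\mathcal{H}\ne\emptyset$, else $0$. Extended mistake tree w.r.t. $\mathcal{H}$: a finite full binary tree (possibly a single leaf) in which each internal node $v$ is labeled by $x_v\in\mathcal{X}$ and has two solid downward edges, to its left child (label $-1$) and right child (label $+1$), plus one dashed downward edge to one of its two children; each leaf is labeled by some $h\in\mathcal{H}$ with $h(x_v)$ equal to the direction label at every internal node $v$ on the root-to-leaf path. A root-to-leaf path chooses at each internal node one downward edge; its length is its number of edges. The tree is $(k,m)$-difficult if every root-to-leaf path using at most $k$ solid edges has length at least $m$. $\mathrm{ELdim}(\mathcal{H},k)$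 is the supremum of $m$ such that a $(k,m)$-difficult extended mistake tree w.r.t. $\mathcal{H}$ exists (so $\mathrm{ELdim}(\mathcal{H},k)\ge0$ forces $\mathcal{H}\neq\emptyset$). *)

theory Defs
  imports "HOL-Analysis.Analysis"
begin

text \<open>Labels: False encodes -1, True encodes +1. Hypotheses are maps 'x \<Rightarrow> bool.\<close>

text \<open>A depth-t X-valued tree is a function from sign prefixes to X:
  x_s(eps_1,...,eps_{s-1}) = T [eps_1,...,eps_{s-1}] (only prefixes of length < t matter).\<close>

definition shattered_set :: "('x \<Rightarrow> bool) set \<Rightarrow> (bool list \<Rightarrow> 'x) \<Rightarrow> nat \<Rightarrow> bool list set" where
  "shattered_set H T t = {eps. length eps = t \<and>
      (\<exists>h\<in>H. \<forall>s<t. eps ! s = h (T (take s eps)))}"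

definition shatter_coeff :: "('x \<Rightarrow> bool) set \<Rightarrow> nat \<Rightarrow> nat" where
  "shatter_coeff H t = Max {card (shattered_set H T t) | T. True}"

text \<open>Node x d l r: internal node labelled x, left child l (label -1 = False),
  right child r (label +1 = True), dashed edge to the child in direction d.\<close>
datatype 'x emtree = Leaf "'x \<Rightarrow> bool" | Node 'x bool "'x emtree" "'x emtree"

fun emt_valid :: "('x \<Rightarrow> bool) set \<Rightarrow> ('x \<times> bool) list \<Rightarrow> 'x emtree \<Rightarrow> bool" where
  "emt_valid H C (Leaf h) = (h \<in> H \<and> (\<forall>(x, b) \<in> set C. h x = b))"
| "emt_valid H C (Node x d l r) =
     (emt_valid H ((x, False) # C) l \<and> emt_valid H ((x, True) # C) r)"

definition ext_mistake_tree :: "('x \<Rightarrow> bool) set \<Rightarrow> 'x emtree \<Rightarrow> bool" where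
  "ext_mistake_tree H T = emt_valid H [] T"

datatype edge = Dashed | Solid bool

fun emt_paths :: "'x emtree \<Rightarrow> edge list set" where
  "emt_paths (Leaf h) = {[]}"
| "emt_paths (Node x d l r) =
     {Dashed # p | p. p \<in> emt_paths (if d then r else l)}
   \<union> {Solid False # p | p. p \<in> emt_paths l}
   \<union> {Solid True # p | p. p \<in> emt_paths r}"

definition num_solid :: "edge list \<Rightarrow> nat" where
  "num_solid p = length (filter (\<lambda>e. e \<noteq> Dashed) p)"

definition difficult :: "nat \<Rightarrow> nat \<Rightarrow> 'x emtree \<Rightarrow> bool" where
  "difficult k m T = (\<forall>p \<in> emt_paths T. num_solid p \<le> k \<longrightarrow> m \<le> length p)"

definition ELdim :: "('x \<Rightarrow> bool) set \<Rightarrow> nat \<Rightarrow> ereal" where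
  "ELdim H k = Sup {ereal (real m) | m. \<exists>T. ext_mistake_tree H T \<and> difficult k m T}"

end

theory Submission
  imports Defs
begin

definition PC :: "('x \<Rightarrow> bool) set \<Rightarrow> ('x \<times> bool) list \<Rightarrow> ('x \<Rightarrow> bool) set" where
  "PC H C = {h\<in>H. \<forall>(x, b) \<in> set C. h x = b}"

lemma fin_shat: "finite (shattered_set G Tx t)"
proof -
  have "shattered_set G Tx t \<subseteq> {xs. length xs = t}" by (auto simp: shattered_set_def)
  moreover have "finite {xs::bool list. length xs = t}" using finite_lists_length_eq[of "UNIV::bool set"] by simp
  ultimately show ?thesis using finite_subset by blast
qed

lemma card_shat_le: "card (shattered_set G Tx t) \<le> card {xs::bool list. length xs = t}"
proof -
  have "shattered_set G Tx t \<subseteq> {xs. length xs = t}" by (auto simp: shattered_set_def)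
  moreover have "finite {xs::bool list. length xs = t}" using finite_lists_length_eq[of "UNIV::bool set"] by simp
  ultimately show ?thesis by (rule card_mono[rotated])
qed

lemma seq_exists: "\<exists>eps. length eps = t \<and> (\<forall>s<t. eps ! s = h (Tx (take s eps)))"
proof (induction t arbitrary: Tx)
  case 0 then show ?case by simp
next
  case (Suc t)
  obtain e where e: "length e = t" "\<forall>s<t. e ! s = h ((\<lambda>p. Tx (h (Tx []) # p)) (take s e))"
    using Suc[of "\<lambda>p. Tx (h (Tx []) # p)"] by blast
  show ?case
  proof (intro exI conjI allI impI)
    show "length (h (Tx []) # e) = Suc t" using e by simp
    fix s assume "s < Suc t"
    then show "(h (Tx []) # e) ! s = h (Tx (take s (h (Tx []) # e)))"
      using e by (cases s) auto
  qed
qed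

lemma card_ge1: assumes "G \<noteq> {}" shows "1 \<le> card (shattered_set G Tx t)"
proof -
  obtain h where h: "h \<in> G" using assms by blast
  obtain e where "length e = t \<and> (\<forall>s<t. e ! s = h (Tx (take s e)))" using seq_exists by blast
  then have "e \<in> shattered_set G Tx t" using h by (auto simp: shattered_set_def)
  then have "shattered_set G Tx t \<noteq> {}" by blast
  then show ?thesis using fin_shat[of G Tx t] by (simp add: Suc_le_eq card_gt_0_iff)
qed

lemma valid_nonempty: "emt_valid H C T \<Longrightarrow> PC H C \<noteq> {}"
proof (induction T arbitrary: C)
  case (Leaf h) then show ?case by (auto simp: PC_def)
next
  case (Node x d l r)
  then have "PC H ((x, False) # C) \<noteq> {}" by simp
  then show ?case by (auto simp: PC_def)
qed

lemma combine:
  fixes Tl Tr :: "bool list \<Rightarrow> 'x" and x :: "'x"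
  defines "Tx \<equiv> (\<lambda>p. case p of [] \<Rightarrow> x | b # q \<Rightarrow> if b then Tr q else Tl q)"
  shows "card (shattered_set (PC H ((x, False) # C)) Tl t) + card (shattered_set (PC H ((x, True) # C)) Tr t)
     \<le> card (shattered_set (PC H C) Tx (Suc t))"
proof -
  let ?SL = "shattered_set (PC H ((x, False) # C)) Tl t"
  let ?SR = "shattered_set (PC H ((x, True) # C)) Tr t"
  have sub: "Cons False ` ?SL \<union> Cons True ` ?SR \<subseteq> shattered_set (PC H C) Tx (Suc t)"
  proof
    fix z assume "z \<in> Cons False ` ?SL \<union> Cons True ` ?SR"
    then show "z \<in> shattered_set (PC H C) Tx (Suc t)"
    proof
      assume "z \<in> Cons False ` ?SL"
      then obtain e h where z: "z = False # e" and e: "length e = t" and h: "h \<in> PC H ((x, False) # C)"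
        and hs: "\<forall>s<t. e ! s = h (Tl (take s e))"
        by (auto simp: shattered_set_def)
      have "h \<in> PC H C" "h x = False" using h by (auto simp: PC_def)
      moreover have "\<forall>s<Suc t. z ! s = h (Tx (take s z))"
      proof (intro allI impI)
        fix s assume "s < Suc t"
        then show "z ! s = h (Tx (take s z))" using hs z \<open>h x = False\<close>
          by (cases s) (auto simp: Tx_def)
      qed
      ultimately show ?thesis using z e by (auto simp: shattered_set_def)
    next
      assume "z \<in> Cons True ` ?SR"
      then obtain e h where z: "z = True # e" and e: "length e = t" and h: "h \<in> PC H ((x, True) # C)"
        and hs: "\<forall>s<t. e ! s = h (Tr (take s e))"
        by (auto simp: shattered_set_def)
      have "h \<in> PC H C" "h x = True" using h by (auto simp: PC_def)
      moreover have "\<forall>s<Suc t. z ! s = h (Tx (take s z))"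
      proof (intro allI impI)
        fix s assume "s < Suc t"
        then show "z ! s = h (Tx (take s z))" using hs z \<open>h x = True\<close>
          by (cases s) (auto simp: Tx_def)
      qed
      ultimately show ?thesis using z e by (auto simp: shattered_set_def)
    qed
  qed
  have "card (Cons False ` ?SL \<union> Cons True ` ?SR) = card (Cons False ` ?SL) + card (Cons True ` ?SR)"
    by (rule card_Un_disjoint) (auto intro: fin_shat)
  also have "\<dots> = card ?SL + card ?SR" by (simp add: card_image)
  finally show ?thesis using card_mono[OF fin_shat sub] by simp
qed

lemma binom_pascal: "(\<Sum>i\<le>k+1. Suc t choose i) = (\<Sum>i\<le>k+1. t choose i) + (\<Sum>i\<le>k. t choose i)"
  by (induction k) auto

lemma sum_choose0: "(\<Sum>i\<le>k. (0::nat) choose i) = 1"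
  by (induction k) auto

lemma main:
  "emt_valid H C T \<Longrightarrow> difficult k t T \<Longrightarrow>
   \<exists>Tx. card (shattered_set (PC H C) Tx t) \<ge> (\<Sum>i\<le>k+1. t choose i)"
proof (induction t arbitrary: C T k)
  case 0
  have "PC H C \<noteq> {}" using valid_nonempty[OF "0.prems"(1)] .
  then have "1 \<le> card (shattered_set (PC H C) (\<lambda>_. undefined) 0)"
    by (rule card_ge1)
  then show ?case unfolding sum_choose0 by auto
next
  case (Suc t)
  show ?case
  proof (cases T)
    case (Leaf h)
    have "[] \<in> emt_paths T" "num_solid [] \<le> k" using Leaf by (auto simp: num_solid_def)
    then have False using Suc.prems(2) unfolding difficult_def by fastforce
    then show ?thesis ..
  next
    case (Node x d l r)
    have vl: "emt_valid H ((x, False) # C) l" and vr: "emt_valid H ((x, True) # C) r"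
      using Suc.prems(1) Node by auto
    have dif: "\<And>p. p \<in> emt_paths T \<Longrightarrow> num_solid p \<le> k \<Longrightarrow> Suc t \<le> length p"
      using Suc.prems(2) unfolding difficult_def by blast
    define D where "D = (if d then r else l)"
    define N where "N = (if d then l else r)"
    have vD: "emt_valid H ((x, d) # C) D" using vl vr unfolding D_def by (cases d) auto
    have vN: "emt_valid H ((x, \<not> d) # C) N" using vl vr unfolding N_def by (cases d) auto
    have dD: "difficult k t D"
      unfolding difficult_def
    proof (intro ballI impI)
      fix p assume p: "p \<in> emt_paths D" "num_solid p \<le> k"
      have "Dashed # p \<in> emt_paths T" using p(1) Node unfolding D_def by auto
      moreover have "num_solid (Dashed # p) \<le> k" using p(2) by (simp add: num_solid_def)
      ultimately have "Suc t \<le> length (Dashed # p)" by (rule dif)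
      then show "t \<le> length p" by simp
    qed
    have dN: "difficult k' t N" if kk: "k = Suc k'" for k'
      unfolding difficult_def
    proof (intro ballI impI)
      fix p assume p: "p \<in> emt_paths N" "num_solid p \<le> k'"
      have "Solid (\<not> d) # p \<in> emt_paths T" using p(1) Node unfolding N_def by (cases d) auto
      moreover have "num_solid (Solid (\<not> d) # p) \<le> k" using p(2) kk by (simp add: num_solid_def)
      ultimately have "Suc t \<le> length (Solid (\<not> d) # p)" by (rule dif)
      then show "t \<le> length p" by simp
    qed
    have N: "\<exists>Tx. card (shattered_set (PC H ((x, \<not> d) # C)) Tx t) \<ge> (\<Sum>i\<le>k. t choose i)"
    proof (cases k)
      case 0
      have "PC H ((x, \<not> d) # C) \<noteq> {}" by (rule valid_nonempty[OF vN])
      then have "1 \<le> card (shattered_set (PC H ((x, \<not> d) # C)) (\<lambda>_. x) t)" by (rule card_ge1)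
      then show ?thesis using 0 by auto
    next
      case (Suc k')
      have "\<exists>Tx. card (shattered_set (PC H ((x, \<not> d) # C)) Tx t) \<ge> (\<Sum>i\<le>k'+1. t choose i)"
        by (rule Suc.IH[OF vN dN[OF Suc]])
      then show ?thesis using Suc by simp
    qed
    have D: "\<exists>Tx. card (shattered_set (PC H ((x, d) # C)) Tx t) \<ge> (\<Sum>i\<le>k+1. t choose i)"
      by (rule Suc.IH[OF vD dD])
    obtain TN where TN: "card (shattered_set (PC H ((x, \<not> d) # C)) TN t) \<ge> (\<Sum>i\<le>k. t choose i)"
      using N by blast
    obtain TD where TD: "card (shattered_set (PC H ((x, d) # C)) TD t) \<ge> (\<Sum>i\<le>k+1. t choose i)"
      using D by blast
    show ?thesis
    proof (cases d)
      case True
      have "card (shattered_set (PC H ((x, False) # C)) TN t) + card (shattered_set (PC H ((x, True) # C)) TD t)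
        \<le> card (shattered_set (PC H C) (\<lambda>p. case p of [] \<Rightarrow> x | b # q \<Rightarrow> if b then TD q else TN q) (Suc t))"
        by (rule combine)
      moreover have "card (shattered_set (PC H ((x, False) # C)) TN t) \<ge> (\<Sum>i\<le>k. t choose i)"
        using TN True by simp
      moreover have "card (shattered_set (PC H ((x, True) # C)) TD t) \<ge> (\<Sum>i\<le>k+1. t choose i)"
        using TD True by simp
      ultimately have "(\<Sum>i\<le>k+1. Suc t choose i) \<le> card (shattered_set (PC H C) (\<lambda>p. case p of [] \<Rightarrow> x | b # q \<Rightarrow> if b then TD q else TN q) (Suc t))"
        using binom_pascal[of t k] by linarith
      then show ?thesis by blast
    next
      case False
      have "card (shattered_set (PC H ((x, False) # C)) TD t) + card (shattered_set (PC H ((x, True) # C)) TN t)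
        \<le> card (shattered_set (PC H C) (\<lambda>p. case p of [] \<Rightarrow> x | b # q \<Rightarrow> if b then TN q else TD q) (Suc t))"
        by (rule combine)
      moreover have "card (shattered_set (PC H ((x, True) # C)) TN t) \<ge> (\<Sum>i\<le>k. t choose i)"
        using TN False by simp
      moreover have "card (shattered_set (PC H ((x, False) # C)) TD t) \<ge> (\<Sum>i\<le>k+1. t choose i)"
        using TD False by simp
      ultimately have "(\<Sum>i\<le>k+1. Suc t choose i) \<le> card (shattered_set (PC H C) (\<lambda>p. case p of [] \<Rightarrow> x | b # q \<Rightarrow> if b then TN q else TD q) (Suc t))"
        using binom_pascal[of t k] by linarith
      then show ?thesis by blast
    qed
  qed
qed

lemma eldim_exists:
  assumes "ELdim H k \<ge> ereal (real t)"
  shows "\<exists>m T. t \<le> m \<and> ext_mistake_tree H T \<and> difficult k m T"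
proof (rule ccontr)
  assume nt: "\<not> ?thesis"
  have "\<forall>y \<in> {ereal (real m) | m. \<exists>T. ext_mistake_tree H T \<and> difficult k m T}. y \<le> ereal (real t - 1)"
  proof
    fix y assume "y \<in> {ereal (real m) | m. \<exists>T. ext_mistake_tree H T \<and> difficult k m T}"
    then obtain m T where y: "y = ereal (real m)" "ext_mistake_tree H T" "difficult k m T" by blast
    then have "m < t" using nt by (meson not_le)
    then have "real m \<le> real t - 1" by linarith
    then show "y \<le> ereal (real t - 1)" using y by simp
  qed
  then have "ELdim H k \<le> ereal (real t - 1)" unfolding ELdim_def by (meson Sup_least)
  with assms have "ereal (real t) \<le> ereal (real t - 1)" by (rule order_trans)
  then show False by simp
qed

theorem mainTheorem17:
  fixes H :: "('x \<Rightarrow> bool) set" and k t :: nat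
  assumes "ELdim H k \<ge> ereal (real t)"
  shows "shatter_coeff H t \<ge> (\<Sum>i\<le>k+1. t choose i)"
proof -
  obtain m T where m: "t \<le> m" "ext_mistake_tree H T" "difficult k m T"
    using eldim_exists[OF assms] by blast
  have "difficult k t T" using m by (force simp: difficult_def)
  then obtain Tx where Tx: "card (shattered_set (PC H []) Tx t) \<ge> (\<Sum>i\<le>k+1. t choose i)"
    using main m(2) unfolding ext_mistake_tree_def by blast
  have "PC H [] = H" by (simp add: PC_def)
  have fin: "finite {card (shattered_set H T t) | T. True}"
    by (rule finite_subset[of _ "{..card {xs::bool list. length xs = t}}"]) (auto intro: card_shat_le)
  have "card (shattered_set H Tx t) \<le> shatter_coeff H t"
    unfolding shatter_coeff_def by (rule Max_ge[OF fin]) blast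
  then show ?thesis using Tx \<open>PC H [] = H\<close> by simp
qed

end
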